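(* Let $mG$ be a finite canonical misinformation game, $\Gamma=(\mathcal{AD}^*(\{mG\}),E)$ its adaptation graph, and $\Gamma'$ its loopless version. Then the length of the longest path in $\Gamma'$ is $\mathfrak{L}_{\mathcal{AD}}(mG)$.
   Context: A normal-form game is $G=\langle N,S,P\rangle$ with finite players $N$, finite pure strategy sets $S_i$, positions $S=\times_i S_i$, payoffs $P_i:S\to\mathbb{R}$. A misinformation game $mG=\langle G^0,G^1,\dots,G^{|N|}\rangle$ consists of the actual game $G^0$ and subjective games $G^i$; it is canonical if all $G^i=\langle N,S,P^i\rangle$ differ from $G^0$ only in payoffs and in every $G^i$ all players have equally many pure strategies. $NME(mG)$ is the set of profiles $\sigma=(\sigma_1,\dots,\sigma_{|N|})$ such that each $\sigma_i$ is player $i$'s component of some Nash equilibrium of $G^i$. $\chi(\sigma)=\mathrm{supp}(\sigma_1)\times\dots\times\mathrm{supp}(\sigma_{|N|})$. For $\vec v\in S$, $mG_{\vec v}$ is obtained by replacing, in every $P^i$ ($i\ge1$), the payoff vector at position $\vec v$ by $P^0(\vec v)$. For a set $M$ of misinformation games, $\mathcal{AD}(M)=\{mG_{\vec u}: mG\in M,\sigma\in NME(mG),\vec u\in\chi(\sigma)\}$, $\mathcal{AD}^{(0)}(M)=M$, $\mathcal{AD}^{(t+1)}(M)=\mathcal{AD}^{(t)}(\mathcal{AD}(M))$, $\mathcal{AD}^*(M)=\bigcup_{t\ge0}\mathcal{AD}^{(t)}(M)$. The length $\mathfrak{L}_{\mathcal{AD}}(mG)$ is the least $t\ge0$ with $\mathcal{AD}^{(t+1)}(\{mG\})=\mathcal{AD}^{(t)}(\{mG\})$.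 The adaptation graph $\Gamma$ has vertex set $\mathcal{AD}^*(\{mG\})$ and an edge $(mG^1,mG^2)$ iff $mG^2=(mG^1)_{\vec v}$ for some $\sigma\in NME(mG^1)$, $\vec v\in\chi(\sigma)$; $\Gamma'$ is $\Gamma$ with self-loops removed. *)

theory Defs
  imports Main "HOL-Library.Extended_Nat"
begin

text \<open>Canonical finite misinformation games with players 0,...,n-1 and
  pure strategies 0,...,m-1 for every player in every game.  A misinformation game is a pair (P0, Psub):
  P0 is the payoff of the actual game, Psub i the payoff of player i's
  subjective game (i < n).\<close>

type_synonym payoff = "nat list \<Rightarrow> nat \<Rightarrow> real"
type_synonym mgame = "payoff \<times> (nat \<Rightarrow> payoff)"
type_synonym profile = "nat \<Rightarrow> nat \<Rightarrow> real"

definition positions :: "nat \<Rightarrow> nat \<Rightarrow> nat list set" where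
  "positions n m = {v. length v = n \<and> (\<forall>j<n. v ! j < m)}"

definition mixed :: "nat \<Rightarrow> (nat \<Rightarrow> real) \<Rightarrow> bool" where
  "mixed m t \<longleftrightarrow> (\<forall>s<m. 0 \<le> t s) \<and> (\<Sum>s<m. t s) = 1"

definition support :: "nat \<Rightarrow> (nat \<Rightarrow> real) \<Rightarrow> nat set" where
  "support m t = {s. s < m \<and> 0 < t s}"

definition expected_payoff :: "nat \<Rightarrow> nat \<Rightarrow> payoff \<Rightarrow> profile \<Rightarrow> nat \<Rightarrow> real" where
  "expected_payoff n m P \<sigma> i = (\<Sum>v\<in>positions n m. (\<Prod>j<n. \<sigma> j (v ! j)) * P v i)"

definition nash_eq :: "nat \<Rightarrow> nat \<Rightarrow> payoff \<Rightarrow> profile \<Rightarrow> bool" where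
  "nash_eq n m P \<sigma> \<longleftrightarrow> (\<forall>j<n. mixed m (\<sigma> j)) \<and>
     (\<forall>i<n. \<forall>t. mixed m t \<longrightarrow> expected_payoff n m P (\<sigma>(i := t)) i \<le> expected_payoff n m P \<sigma> i)"

definition NME :: "nat \<Rightarrow> nat \<Rightarrow> mgame \<Rightarrow> profile set" where
  "NME n m mG = {\<sigma>. \<forall>i<n. \<exists>\<tau>. nash_eq n m (snd mG i) \<tau> \<and> \<sigma> i = \<tau> i}"

definition chi :: "nat \<Rightarrow> nat \<Rightarrow> profile \<Rightarrow> nat list set" where
  "chi n m \<sigma> = {v \<in> positions n m. \<forall>j<n. v ! j \<in> support m (\<sigma> j)}"

definition adapt :: "nat \<Rightarrow> mgame \<Rightarrow> nat list \<Rightarrow> mgame" where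
  "adapt n mG v = (fst mG, \<lambda>i. if i < n then (snd mG i)(v := fst mG v) else snd mG i)"

definition AD :: "nat \<Rightarrow> nat \<Rightarrow> mgame set \<Rightarrow> mgame set" where
  "AD n m M = {adapt n g v | g \<sigma> v. g \<in> M \<and> \<sigma> \<in> NME n m g \<and> v \<in> chi n m \<sigma>}"

fun AD_iter :: "nat \<Rightarrow> nat \<Rightarrow> nat \<Rightarrow> mgame set \<Rightarrow> mgame set" where
  "AD_iter n m 0 M = M"
| "AD_iter n m (Suc t) M = AD_iter n m t (AD n m M)"

definition AD_star :: "nat \<Rightarrow> nat \<Rightarrow> mgame set \<Rightarrow> mgame set" where
  "AD_star n m M = (\<Union>t. AD_iter n m t M)"

definition AD_length :: "nat \<Rightarrow> nat \<Rightarrow> mgame \<Rightarrow> nat" where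
  "AD_length n m mG = (LEAST t. AD_iter n m (Suc t) {mG} = AD_iter n m t {mG})"

definition adapt_edge :: "nat \<Rightarrow> nat \<Rightarrow> mgame \<Rightarrow> mgame \<Rightarrow> mgame \<Rightarrow> bool" where
  "adapt_edge n m mG0 g1 g2 \<longleftrightarrow> g1 \<in> AD_star n m {mG0} \<and> g2 \<in> AD_star n m {mG0} \<and>
     (\<exists>\<sigma> v. \<sigma> \<in> NME n m g1 \<and> v \<in> chi n m \<sigma> \<and> g2 = adapt n g1 v)"

definition adapt_edge' :: "nat \<Rightarrow> nat \<Rightarrow> mgame \<Rightarrow> mgame \<Rightarrow> mgame \<Rightarrow> bool" where
  "adapt_edge' n m mG0 g1 g2 \<longleftrightarrow> adapt_edge n m mG0 g1 g2 \<and> g1 \<noteq> g2"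

definition is_path' :: "nat \<Rightarrow> nat \<Rightarrow> mgame \<Rightarrow> mgame list \<Rightarrow> bool" where
  "is_path' n m mG0 p \<longleftrightarrow> p \<noteq> [] \<and> distinct p \<and> set p \<subseteq> AD_star n m {mG0} \<and>
     (\<forall>k. Suc k < length p \<longrightarrow> adapt_edge' n m mG0 (p ! k) (p ! Suc k))"

end

theory Submission
  imports Defs "HOL-Homology.Homology"
begin


lemma sumsq_pos:
  fixes d :: "nat \<Rightarrow> real"
  assumes "\<forall>i>p. d i = 0" "d \<noteq> (\<lambda>i. 0)"
  shows "0 < (\<Sum>j\<le>p. (d j)^2)"
proof -
  obtain k where k: "d k \<noteq> 0" using assms(2) by auto
  then have "k \<le> p" using assms(1) by (meson not_le)
  have "(d k)^2 \<le> (\<Sum>j\<le>p. (d j)^2)" by (rule member_le_sum) (use \<open>k\<le>p\<close> in auto)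
  moreover have "0 < (d k)^2" using k by simp
  ultimately show ?thesis by linarith
qed

lemma nsphere_eq: "nsphere p = top_of_set {x. (\<Sum>i\<le>p. (x i)^2) = 1 \<and> (\<forall>i>p. x i = 0)}"
  by (simp add: nsphere euclidean_product_topology)

lemma hom_lemma:
  fixes h :: "real \<times> (nat \<Rightarrow> real) \<Rightarrow> (nat \<Rightarrow> real)" and p :: nat
  defines "Sph \<equiv> {x. (\<Sum>i\<le>p. (x i)^2) = 1 \<and> (\<forall>i>p. x i = 0)}"
  assumes cont: "continuous_on ({0..1} \<times> Sph) h" and img: "h ` ({0..1}\<times>Sph) \<subseteq> Sph"
    and "\<forall>x\<in>Sph. h(0,x) = a x" "\<forall>x\<in>Sph. h(1,x) = b x"
  shows "homotopic_with (\<lambda>x. True) (nsphere p) (nsphere p) a b"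
  unfolding nsphere_eq
  apply (subst homotopic_with)
   apply simp
  apply (rule exI[of _ h])
  using assms by (auto simp: Sph_def image_subset_iff)

lemma cont_snd_coord: "continuous_on A (\<lambda>z::real \<times> (nat\<Rightarrow>real). snd z i)"
  by (rule continuous_on_compose2[OF continuous_on_product_coordinates continuous_on_snd]) auto

lemma brouwer_nat:
  fixes f :: "(nat \<Rightarrow> real) \<Rightarrow> (nat \<Rightarrow> real)" and p :: nat
  defines "B \<equiv> {x. (\<forall>i>p. x i = 0) \<and> (\<Sum>i\<le>p. (x i)^2) \<le> 1}"
  assumes cf: "continuous_on B f" and fB: "f ` B \<subseteq> B"
  shows "\<exists>x\<in>B. f x = x"
proof (rule ccontr)
  assume "\<not> ?thesis"
  then have nofix: "\<And>x. x \<in> B \<Longrightarrow> f x \<noteq> x" by blast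
  define Sph where "Sph = {x. (\<Sum>i\<le>p. (x i)^2) = 1 \<and> (\<forall>i>p. x i = (0::real))}"
  define nrm where "nrm = (\<lambda>d::nat\<Rightarrow>real. \<lambda>i. d i / sqrt (\<Sum>j\<le>p. (d j)^2))"
  have SB: "Sph \<subseteq> B" by (auto simp: Sph_def B_def)
  have fcoord: "continuous_on B (\<lambda>y. f y i)" for i
    using cf by (rule continuous_on_product_then_coordinatewise)
  have fz: "f y i = 0" if "y \<in> B" "i > p" for y i using fB that by (auto simp: B_def)
  have fle: "(\<Sum>i\<le>p. (f y i)^2) \<le> 1" if "y\<in>B" for y using fB that by (auto simp: B_def)
  have nrm_in: "nrm d \<in> Sph" if "\<forall>i>p. d i = 0" "d \<noteq> (\<lambda>i. 0)" for d
  proof -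
    have pos: "0 < (\<Sum>j\<le>p. (d j)^2)" by (rule sumsq_pos[OF that])
    have "(\<Sum>i\<le>p. (nrm d i)^2) = (\<Sum>i\<le>p. (d i)^2) / (\<Sum>j\<le>p. (d j)^2)"
      using pos by (simp add: nrm_def power_divide sum_divide_distrib[symmetric])
    also have "\<dots> = 1" using pos by simp
    finally show ?thesis using that(1) by (auto simp: Sph_def nrm_def)
  qed
  have nrm_id: "nrm x = x" if "x \<in> Sph" for x using that by (auto simp: Sph_def nrm_def)
  have d1: "(\<lambda>i. x i - t * f x i) \<noteq> (\<lambda>i. 0)" if t: "t \<in> {0..1}" and x: "x \<in> Sph" for t x
  proof
    assume "(\<lambda>i. x i - t * f x i) = (\<lambda>i. 0)"
    then have eq: "x i = t * f x i" for i by (metis right_minus_eq)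
    show False
    proof cases
      assume "t = 1" then have "f x = x" using eq by auto
      with nofix SB x show False by auto
    next
      assume "t \<noteq> 1" then have t1: "t < 1" "0 \<le> t" using t by auto
      have "1 = (\<Sum>i\<le>p. (x i)^2)" using x by (simp add: Sph_def)
      also have "\<dots> = t^2 * (\<Sum>i\<le>p. (f x i)^2)"
        by (simp add: eq power_mult_distrib sum_distrib_left)
      also have "\<dots> \<le> t^2 * 1" using fle SB x by (intro mult_left_mono) auto
      also have "\<dots> < 1" using t1 by (simp add: power_less_one_iff)
      finally show False by simp
    qed
  qed
  have yB: "(\<lambda>j. (1 - t) * x j) \<in> B" if t: "t \<in> {0..1}" and x: "x \<in> Sph" for t x
  proof -
    have "(\<Sum>i\<le>p. ((1 - t) * x i)^2) = (1-t)^2 * (\<Sum>i\<le>p. (x i)^2)"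
      by (simp add: power_mult_distrib sum_distrib_left)
    also have "\<dots> = (1-t)^2" using x by (simp add: Sph_def)
    also have "\<dots> \<le> 1" using t by (simp add: power_le_one)
    finally show ?thesis using x by (auto simp: B_def Sph_def)
  qed
  have d2: "(\<lambda>i. (1 - t) * x i - f (\<lambda>j. (1 - t) * x j) i) \<noteq> (\<lambda>i. 0)" if t: "t \<in> {0..1}" and x: "x \<in> Sph" for t x
  proof
    assume "(\<lambda>i. (1 - t) * x i - f (\<lambda>j. (1 - t) * x j) i) = (\<lambda>i. 0)"
    then have "f (\<lambda>j. (1 - t) * x j) = (\<lambda>j. (1 - t) * x j)"
      by (metis right_minus_eq)
    with nofix yB[OF t x] show False by blast
  qed
  have fsnd: "continuous_on ({0..1}\<times>Sph) (\<lambda>z. f (snd z) i)" for i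
    by (rule continuous_on_compose2[OF fcoord continuous_on_snd]) (use SB in auto)
  have inner: "continuous_on ({0..1}\<times>Sph) (\<lambda>z::real\<times>(nat\<Rightarrow>real). \<lambda>j. (1 - fst z) * snd z j)"
    by (intro continuous_on_coordinatewise_then_product continuous_intros cont_snd_coord)
  have fsnd2: "continuous_on ({0..1}\<times>Sph) (\<lambda>z. f (\<lambda>j. (1 - fst z) * snd z j) i)" for i
    by (rule continuous_on_compose2[OF fcoord inner]) (use yB in auto)
  define H1 where "H1 = (\<lambda>z::real\<times>(nat\<Rightarrow>real). nrm (\<lambda>i. snd z i - fst z * f (snd z) i))"
  define H2 where "H2 = (\<lambda>z::real\<times>(nat\<Rightarrow>real). nrm (\<lambda>i. (1 - fst z) * snd z i - f (\<lambda>j. (1 - fst z) * snd z j) i))"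
  have den1: "sqrt (\<Sum>j\<le>p. (snd z j - fst z * f (snd z) j)^2) \<noteq> 0" if "z \<in> {0..1}\<times>Sph" for z
  proof -
    have "0 < (\<Sum>j\<le>p. (snd z j - fst z * f (snd z) j)^2)"
      apply (rule sumsq_pos[where d="\<lambda>j. snd z j - fst z * f (snd z) j"])
      using that d1[of "fst z" "snd z"] fz[of "snd z"] SB by (auto simp: Sph_def)
    then show ?thesis by simp
  qed
  have den2: "sqrt (\<Sum>j\<le>p. ((1 - fst z) * snd z j - f (\<lambda>j. (1 - fst z) * snd z j) j)^2) \<noteq> 0"
    if "z \<in> {0..1}\<times>Sph" for z
  proof -
    have "0 < (\<Sum>j\<le>p. ((1 - fst z) * snd z j - f (\<lambda>j. (1 - fst z) * snd z j) j)^2)"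
      apply (rule sumsq_pos[where d="\<lambda>j. (1 - fst z) * snd z j - f (\<lambda>j. (1 - fst z) * snd z j) j"])
      using that d2[of "fst z" "snd z"] fz[of "(\<lambda>j. (1 - fst z) * snd z j)"] yB[of "fst z" "snd z"]
      by (auto simp: Sph_def)
    then show ?thesis by simp
  qed
  have c1: "continuous_on ({0..1}\<times>Sph) H1"
    unfolding H1_def nrm_def
    by (intro continuous_on_coordinatewise_then_product continuous_intros cont_snd_coord fsnd) (use den1 in blast)
  have c2: "continuous_on ({0..1}\<times>Sph) H2"
    unfolding H2_def nrm_def
    by (intro continuous_on_coordinatewise_then_product continuous_intros cont_snd_coord fsnd2) (use den2 in blast)
  have i1: "H1 ` ({0..1}\<times>Sph) \<subseteq> Sph"
  proof (clarsimp simp: H1_def)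
    fix t x assume "0 \<le> t" "t \<le> (1::real)" "x \<in> Sph"
    then show "nrm (\<lambda>i. x i - t * f x i) \<in> Sph"
      using d1[of t x] fz[of x] SB by (intro nrm_in) (auto simp: Sph_def)
  qed
  have i2: "H2 ` ({0..1}\<times>Sph) \<subseteq> Sph"
  proof (clarsimp simp: H2_def)
    fix t x assume "0 \<le> t" "t \<le> (1::real)" "x \<in> Sph"
    then show "nrm (\<lambda>i. (1 - t) * x i - f (\<lambda>j. (1 - t) * x j) i) \<in> Sph"
      using d2[of t x] fz[of "(\<lambda>j. (1 - t) * x j)"] yB[of t x] by (intro nrm_in) (auto simp: Sph_def)
  qed
  have h1: "homotopic_with (\<lambda>x. True) (nsphere p) (nsphere p) id (\<lambda>x. H1 (1,x))"
    by (rule hom_lemma[OF c1[unfolded Sph_def] i1[unfolded Sph_def]])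
       (auto simp: H1_def nrm_id[unfolded Sph_def] Sph_def)
  have h2: "homotopic_with (\<lambda>x. True) (nsphere p) (nsphere p) (\<lambda>x. H1 (1,x)) (\<lambda>x. H2 (1, (\<lambda>i. 0)))"
    by (rule hom_lemma[OF c2[unfolded Sph_def] i2[unfolded Sph_def]])
       (auto simp: H1_def H2_def Sph_def)
  have "contractible_space (nsphere p)"
    unfolding contractible_space_def using homotopic_with_trans[OF h1 h2] by blast
  then show False using non_contractible_space_nsphere by blast
qed



definition dl :: "nat \<Rightarrow> nat \<Rightarrow> real" where "dl s = (\<lambda>s'. if s' = s then 1 else 0)"

lemma positions_nth: "v \<in> positions n m \<Longrightarrow> j < n \<Longrightarrow> v ! j < m"
  by (auto simp: positions_def)

lemma E_upd:
  assumes "i < n"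
  shows "expected_payoff n m P (\<sigma>(i:=t)) i =
     (\<Sum>v\<in>positions n m. t (v!i) * ((\<Prod>j\<in>{..<n}-{i}. \<sigma> j (v!j)) * P v i))"
  unfolding expected_payoff_def
proof (rule sum.cong[OF refl])
  fix v
  have "(\<Prod>j<n. (\<sigma>(i := t)) j (v ! j)) = (\<sigma>(i := t)) i (v ! i) * (\<Prod>j\<in>{..<n}-{i}. (\<sigma>(i := t)) j (v ! j))"
    using assms by (subst prod.remove[of "{..<n}" i]) auto
  also have "(\<Prod>j\<in>{..<n}-{i}. (\<sigma>(i := t)) j (v ! j)) = (\<Prod>j\<in>{..<n}-{i}. \<sigma> j (v ! j))"
    by (rule prod.cong) auto
  finally show "(\<Prod>j<n. (\<sigma>(i := t)) j (v ! j)) * P v i = t (v!i) * ((\<Prod>j\<in>{..<n}-{i}. \<sigma> j (v!j)) * P v i)"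
    by simp
qed

lemma E_lin:
  assumes "i < n"
  shows "expected_payoff n m P (\<sigma>(i:=t)) i = (\<Sum>s<m. t s * expected_payoff n m P (\<sigma>(i:=dl s)) i)"
proof -
  define R where "R v = (\<Prod>j\<in>{..<n}-{i}. \<sigma> j (v!j)) * P v i" for v
  have "(\<Sum>s<m. t s * expected_payoff n m P (\<sigma>(i:=dl s)) i)
      = (\<Sum>s<m. \<Sum>v\<in>positions n m. t s * (dl s (v!i) * R v))"
    by (simp add: E_upd[OF assms] R_def sum_distrib_left)
  also have "\<dots> = (\<Sum>v\<in>positions n m. \<Sum>s<m. t s * (dl s (v!i) * R v))"
    by (rule sum.swap)
  also have "\<dots> = (\<Sum>v\<in>positions n m. t (v!i) * R v)"
  proof (rule sum.cong[OF refl])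
    fix v assume v: "v \<in> positions n m"
    have "(\<Sum>s<m. t s * (dl s (v!i) * R v)) = (\<Sum>s<m. if v!i = s then t s * R v else 0)"
      by (rule sum.cong) (auto simp: dl_def)
    also have "\<dots> = t (v!i) * R v" using positions_nth[OF v assms] by (simp add: sum.delta')
    finally show "(\<Sum>s<m. t s * (dl s (v!i) * R v)) = t (v!i) * R v" .
  qed
  finally show ?thesis by (simp add: E_upd[OF assms] R_def)
qed

lemma E_cont:
  assumes "\<And>j s. continuous_on A (\<lambda>x. S x j s)"
  shows "continuous_on A (\<lambda>x. expected_payoff n m P (S x) i)"
  unfolding expected_payoff_def by (intro continuous_intros assms)

definition gain :: "nat \<Rightarrow> nat \<Rightarrow> payoff \<Rightarrow> profile \<Rightarrow> nat \<Rightarrow> nat \<Rightarrow> real" where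
  "gain n m P \<sigma> i s = max 0 (expected_payoff n m P (\<sigma>(i:=dl s)) i - expected_payoff n m P \<sigma> i)"

definition nmap :: "nat \<Rightarrow> nat \<Rightarrow> payoff \<Rightarrow> profile \<Rightarrow> profile" where
  "nmap n m P \<sigma> = (\<lambda>i s. (\<sigma> i s + gain n m P \<sigma> i s) / (1 + (\<Sum>t<m. gain n m P \<sigma> i t)))"

lemma gain_nonneg: "0 \<le> gain n m P \<sigma> i s" by (simp add: gain_def)

lemma nash_fix:
  assumes mx: "\<forall>i<n. mixed m (\<sigma> i)" and fx: "\<forall>i<n. \<forall>s<m. nmap n m P \<sigma> i s = \<sigma> i s"
  shows "nash_eq n m P \<sigma>"
  unfolding nash_eq_def
proof (intro conjI allI impI)
  fix j assume "j < n" then show "mixed m (\<sigma> j)" using mx by auto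
next
  fix i t assume i: "i < n" and t: "mixed m t"
  define e where "e s = expected_payoff n m P (\<sigma>(i:=dl s)) i" for s
  define e0 where "e0 = expected_payoff n m P \<sigma> i"
  define g where "g s = gain n m P \<sigma> i s" for s
  define G where "G = (\<Sum>t<m. g t)"
  have g_def': "g s = max 0 (e s - e0)" for s by (simp add: g_def gain_def e_def e0_def)
  have G0: "0 \<le> G" unfolding G_def g_def by (intro sum_nonneg gain_nonneg)
  have sg: "\<sigma> i s * G = g s" if "s < m" for s
  proof -
    have "(\<sigma> i s + g s) / (1 + G) = \<sigma> i s" using fx i that by (simp add: nmap_def g_def G_def)
    then have "\<sigma> i s + g s = \<sigma> i s * (1 + G)" using G0 by (simp add: field_simps)
    then show ?thesis by (simp add: algebra_simps)
  qed
  have mi: "mixed m (\<sigma> i)" using mx i by auto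
  have e0s: "e0 = (\<Sum>s<m. \<sigma> i s * e s)"
    using E_lin[OF i, where m=m and P=P and \<sigma>=\<sigma> and t="\<sigma> i"] by (simp add: e0_def e_def)
  have "\<exists>s0<m. 0 < \<sigma> i s0 \<and> e s0 \<le> e0"
  proof (rule ccontr)
    assume "\<not> ?thesis"
    then have h: "\<And>s. s < m \<Longrightarrow> 0 < \<sigma> i s \<Longrightarrow> e0 < e s" by force
    have "\<exists>s1<m. 0 < \<sigma> i s1"
    proof (rule ccontr)
      assume "\<not> ?thesis"
      then have "\<forall>s<m. \<sigma> i s = 0" using mi by (force simp: mixed_def)
      then have "(\<Sum>s<m. \<sigma> i s) = 0" by simp
      then show False using mi by (simp add: mixed_def)
    qed
    then obtain s1 where s1: "s1 < m" "0 < \<sigma> i s1" by blast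
    have "0 < (\<Sum>s<m. \<sigma> i s * (e s - e0))"
    proof (rule sum_pos2[of "{..<m}" s1])
      show "0 < \<sigma> i s1 * (e s1 - e0)" using s1 h by simp
      fix s assume "s \<in> {..<m}"
      then show "0 \<le> \<sigma> i s * (e s - e0)" using h mi
        by (cases "0 < \<sigma> i s") (auto simp: mixed_def less_le)
    qed (use s1 in auto)
    also have "(\<Sum>s<m. \<sigma> i s * (e s - e0)) = e0 - e0 * (\<Sum>s<m. \<sigma> i s)"
    proof -
      have "(\<Sum>s<m. \<sigma> i s * (e s - e0)) = (\<Sum>s<m. \<sigma> i s * e s) - (\<Sum>s<m. \<sigma> i s * e0)"
        by (simp add: right_diff_distrib sum_subtractf)
      also have "(\<Sum>s<m. \<sigma> i s * e0) = e0 * (\<Sum>s<m. \<sigma> i s)"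
        by (simp add: sum_distrib_left mult.commute)
      finally show ?thesis using e0s by simp
    qed
    also have "\<dots> = 0" using mi by (simp add: mixed_def)
    finally show False by simp
  qed
  then obtain s0 where s0: "s0 < m" "0 < \<sigma> i s0" "e s0 \<le> e0" by blast
  have "g s0 = 0" using s0 by (simp add: g_def')
  then have "G = 0" using sg[OF s0(1)] s0(2) by simp
  then have gz: "\<forall>s\<in>{..<m}. g s = 0" unfolding G_def
    by (subst sum_nonneg_eq_0_iff[symmetric]) (auto simp: g_def gain_nonneg)
  have les: "e s \<le> e0" if "s < m" for s
  proof -
    have "g s = 0" using gz that by blast
    then have "max 0 (e s - e0) = 0" by (simp only: g_def')
    then show ?thesis by (simp add: max_def split: if_splits)
  qed
  have "expected_payoff n m P (\<sigma>(i := t)) i = (\<Sum>s<m. t s * e s)"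
    unfolding e_def by (rule E_lin[OF i])
  also have "\<dots> \<le> (\<Sum>s<m. t s * e0)"
    using t les by (intro sum_mono mult_left_mono) (auto simp: mixed_def)
  also have "\<dots> = (\<Sum>s<m. t s) * e0" by (rule sum_distrib_right[symmetric])
  also have "\<dots> = e0" using t by (simp add: mixed_def)
  finally show "expected_payoff n m P (\<sigma>(i := t)) i \<le> expected_payoff n m P \<sigma> i"
    by (simp add: e0_def)
qed

definition rho :: "nat \<Rightarrow> (nat \<Rightarrow> real) \<Rightarrow> nat \<Rightarrow> real" where
  "rho m y = (\<lambda>s. (max (y s) 0 + max 0 (1 - (\<Sum>t<m. max (y t) 0)) / m) / max (\<Sum>t<m. max (y t) 0) 1)"

lemma rho_mixed:
  assumes "0 < m" shows "mixed m (rho m y)"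
proof -
  define S where "S = (\<Sum>t<m. max (y t) 0)"
  define a where "a = max 0 (1 - S)"
  have D: "max S 1 > 0" by simp
  have "(\<Sum>s<m. rho m y s) = (\<Sum>s<m. (max (y s) 0 + a / m)) / max S 1"
    by (simp add: rho_def S_def a_def sum_divide_distrib)
  also have "(\<Sum>s<m. (max (y s) 0 + a / m)) = S + a"
    using assms by (simp add: sum.distrib S_def)
  also have "S + a = max S 1" by (simp add: a_def max_def)
  finally have "(\<Sum>s<m. rho m y s) = 1" using D by simp
  moreover have "0 \<le> rho m y s" for s
    unfolding rho_def by (intro divide_nonneg_nonneg add_nonneg_nonneg) auto
  ultimately show ?thesis by (simp add: mixed_def)
qed

lemma rho_id:
  assumes "mixed m y" "s < m" shows "rho m y s = y s"
proof -
  have "(\<Sum>t<m. max (y t) 0) = (\<Sum>t<m. y t)" using assms(1) by (intro sum.cong) (auto simp: mixed_def)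
  then have "(\<Sum>t<m. max (y t) 0) = 1" using assms(1) by (simp add: mixed_def)
  then show ?thesis using assms by (simp add: rho_def mixed_def)
qed

lemma rho_cong:
  assumes "\<forall>t<m. y t = y' t" "s < m" shows "rho m y s = rho m y' s"
proof -
  have "(\<Sum>t<m. max (y t) 0) = (\<Sum>t<m. max (y' t) 0)" using assms by (intro sum.cong) auto
  then show ?thesis using assms by (simp add: rho_def)
qed

lemma nmap_mixed:
  assumes "mixed m (\<sigma> i)" shows "mixed m (nmap n m P \<sigma> i)"
proof -
  define G where "G = (\<Sum>t<m. gain n m P \<sigma> i t)"
  have G0: "0 \<le> G" unfolding G_def by (intro sum_nonneg gain_nonneg)
  have "(\<Sum>s<m. nmap n m P \<sigma> i s) = (\<Sum>s<m. \<sigma> i s + gain n m P \<sigma> i s) / (1 + G)"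
    by (simp add: nmap_def G_def sum_divide_distrib)
  also have "(\<Sum>s<m. \<sigma> i s + gain n m P \<sigma> i s) = 1 + G"
    using assms by (simp add: sum.distrib G_def mixed_def)
  finally have "(\<Sum>s<m. nmap n m P \<sigma> i s) = 1" using G0 by simp
  moreover have "0 \<le> nmap n m P \<sigma> i s" if "s < m" for s
    unfolding nmap_def using assms that G0[unfolded G_def]
    by (intro divide_nonneg_nonneg add_nonneg_nonneg gain_nonneg) (auto simp: mixed_def)
  ultimately show ?thesis by (simp add: mixed_def)
qed

lemma mixed_le1: assumes "mixed m y" "s < m" shows "y s \<le> 1"
proof -
  have "y s \<le> (\<Sum>t<m. y t)" using assms by (intro member_le_sum) (auto simp: mixed_def)
  then show ?thesis using assms by (simp add: mixed_def)
qed

lemma cx: "continuous_on A (\<lambda>x::nat\<Rightarrow>real. x k)"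
  by (rule continuous_on_subset[OF continuous_on_product_coordinates]) auto

lemma idx_lt: "i < n \<Longrightarrow> s < m \<Longrightarrow> i*m+s < n*(m::nat)"
proof -
  assume "i < n" "s < m"
  then have "i*m + s < i*m + m" by simp
  also have "\<dots> = Suc i * m" by simp
  also have "\<dots> \<le> n * m" using \<open>i<n\<close> by (intro mult_le_mono1) simp
  finally show ?thesis .
qed

theorem nash_exists:
  assumes n: "0 < n" and m: "0 < m"
  shows "\<exists>\<sigma>. nash_eq n m P \<sigma>"
proof -
  define N where "N = n*m"
  define c where "c = real N"
  define p where "p = N - 1"
  have N1: "N \<ge> 1" using n m by (simp add: N_def)
  have c1: "c \<ge> 1" using N1 by (simp add: c_def)
  define tau where "tau x = (\<lambda>i. rho m (\<lambda>s. c * x (i*m+s)))" for x :: "nat \<Rightarrow> real"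
  define F where "F x = (\<lambda>k. if k < N then nmap n m P (tau x) (k div m) (k mod m) / c else 0)" for x
  define B where "B = {x. (\<forall>i>p. x i = 0) \<and> (\<Sum>i\<le>p. (x i)^2) \<le> (1::real)}"
  have taum: "mixed m (tau x i)" for x i unfolding tau_def by (rule rho_mixed[OF m])
  have ctau: "continuous_on UNIV (\<lambda>x. tau x i s)" for i s
    unfolding tau_def rho_def
    by (intro continuous_intros cx) (use m in \<open>auto simp: max_def\<close>)
  have cupd: "continuous_on UNIV (\<lambda>x. ((tau x)(i:=dl s)) j s')" for i s j s'
    by (cases "j = i") (auto simp: ctau)
  have cg: "continuous_on UNIV (\<lambda>x. gain n m P (tau x) i s)" for i s
    unfolding gain_def by (intro continuous_intros E_cont cupd ctau)
  have cnm: "continuous_on UNIV (\<lambda>x. nmap n m P (tau x) i s)" for i s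
  proof -
    have "\<forall>x. 1 + (\<Sum>t<m. gain n m P (tau x) i t) \<noteq> 0"
      using sum_nonneg[of "{..<m}" "gain n m P _ i"] gain_nonneg
      by (metis add_less_same_cancel2 le_add_same_cancel1 less_le_not_le zero_less_one)
    then show ?thesis unfolding nmap_def by (intro continuous_intros ctau cg) auto
  qed
  have cF: "continuous_on B F"
    unfolding F_def
  proof (intro continuous_on_coordinatewise_then_product)
    fix k
    show "continuous_on B (\<lambda>x. if k < N then nmap n m P (tau x) (k div m) (k mod m) / c else 0)"
    proof (cases "k < N")
      case True
      have "continuous_on B (\<lambda>x. nmap n m P (tau x) (k div m) (k mod m))"
        by (rule continuous_on_subset[OF cnm]) simp
      then show ?thesis using True c1 by (simp add: continuous_on_divide continuous_on_const)
    qed simp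
  qed
  have FB: "F ` B \<subseteq> B"
  proof clarify
    fix x assume "x \<in> B"
    have bnd: "0 \<le> F x k \<and> F x k \<le> 1 / c" for k
    proof (cases "k < N")
      case True
      have "k div m < n" using True by (simp add: N_def less_mult_imp_div_less)
      have mx: "mixed m (nmap n m P (tau x) (k div m))" by (rule nmap_mixed[OF taum])
      have km: "k mod m < m" using m by simp
      have "0 \<le> nmap n m P (tau x) (k div m) (k mod m)" using mx km by (simp add: mixed_def)
      moreover have "nmap n m P (tau x) (k div m) (k mod m) \<le> 1" by (rule mixed_le1[OF mx km])
      ultimately show ?thesis using True c1 by (simp add: F_def divide_right_mono)
    next
      case False then show ?thesis using c1 by (simp add: F_def)
    qed
    have "(\<Sum>i\<le>p. (F x i)^2) \<le> (\<Sum>i\<le>p. (1/c)^2)"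
      using bnd by (intro sum_mono power_mono) auto
    also have "\<dots> = N * (1/c)^2" using N1 by (simp add: p_def)
    also have "\<dots> = 1 / c" using c1 by (simp add: c_def power2_eq_square)
    also have "\<dots> \<le> 1" using c1 by simp
    finally have "(\<Sum>i\<le>p. (F x i)^2) \<le> 1" .
    moreover have "\<forall>i>p. F x i = 0" using N1 by (auto simp: F_def p_def)
    ultimately show "F x \<in> B" by (simp add: B_def)
  qed
  obtain x where "x \<in> B" and fx: "F x = x"
    using brouwer_nat[of p F] cF FB unfolding B_def by blast
  have "nash_eq n m P (tau x)"
  proof (rule nash_fix)
    show "\<forall>i<n. mixed m (tau x i)" using taum by blast
    show "\<forall>i<n. \<forall>s<m. nmap n m P (tau x) i s = tau x i s"
    proof (intro allI impI)
      fix i s assume i: "i < n" and s: "s < m"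
      have dec: "c * x (i*m+t) = nmap n m P (tau x) i t" if t: "t < m" for t
      proof -
        have k: "i*m+t < N" using idx_lt[OF i t] by (simp add: N_def)
        have "x (i*m+t) = F x (i*m+t)" using fx by simp
        also have "\<dots> = nmap n m P (tau x) i t / c" using k t by (simp add: F_def)
        finally show ?thesis using c1 by simp
      qed
      have "tau x i s = rho m (\<lambda>t. c * x (i*m+t)) s" by (simp add: tau_def)
      also have "\<dots> = rho m (nmap n m P (tau x) i) s"
        using dec s by (intro rho_cong) auto
      also have "\<dots> = nmap n m P (tau x) i s"
        by (rule rho_id[OF nmap_mixed[OF taum] s])
      finally show "nmap n m P (tau x) i s = tau x i s" by simp
    qed
  qed
  then show ?thesis by blast
qed



definition walk :: "('a \<Rightarrow> 'a set) \<Rightarrow> 'a \<Rightarrow> nat \<Rightarrow> (nat \<Rightarrow> 'a) \<Rightarrow> bool" where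
  "walk S x0 t w \<longleftrightarrow> w 0 = x0 \<and> (\<forall>k<t. w (Suc k) \<in> S (w k))"

definition AS :: "('a \<Rightarrow> 'a set) \<Rightarrow> 'a set \<Rightarrow> 'a set" where
  "AS S M = (\<Union>g\<in>M. S g)"

fun ASi :: "('a \<Rightarrow> 'a set) \<Rightarrow> nat \<Rightarrow> 'a set \<Rightarrow> 'a set" where
  "ASi S 0 M = M"
| "ASi S (Suc t) M = ASi S t (AS S M)"

lemma ASi_Suc: "ASi S (Suc t) M = AS S (ASi S t M)"
  by (induction t arbitrary: M) auto

declare ASi.simps(2)[simp del]

lemma ASi_walk: "ASi S t {x0} = {w t | w. walk S x0 t w}"
proof (induction t)
  case 0
  show ?case by (auto simp: walk_def)
next
  case (Suc t)
  show ?case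
  proof
    show "ASi S (Suc t) {x0} \<subseteq> {w (Suc t) |w. walk S x0 (Suc t) w}"
    proof
      fix g assume "g \<in> ASi S (Suc t) {x0}"
      then obtain h w where h: "g \<in> S h" and w: "walk S x0 t w" "w t = h"
        by (auto simp: ASi_Suc AS_def Suc.IH)
      define w' where "w' = w(Suc t := g)"
      have "walk S x0 (Suc t) w'" using w h
        by (auto simp: walk_def w'_def less_Suc_eq)
      moreover have "w' (Suc t) = g" by (simp add: w'_def)
      ultimately show "g \<in> {w (Suc t) |w. walk S x0 (Suc t) w}" by blast
    qed
  next
    show "{w (Suc t) |w. walk S x0 (Suc t) w} \<subseteq> ASi S (Suc t) {x0}"
    proof clarify
      fix w assume w: "walk S x0 (Suc t) w"
      then have "walk S x0 t w" by (auto simp: walk_def)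
      then have "w t \<in> ASi S t {x0}" using Suc.IH by blast
      moreover have "w (Suc t) \<in> S (w t)" using w by (auto simp: walk_def)
      ultimately show "w (Suc t) \<in> ASi S (Suc t) {x0}" by (auto simp: ASi_Suc AS_def)
    qed
  qed
qed

lemma walk_prefix: "walk S x0 t w \<Longrightarrow> k \<le> t \<Longrightarrow> walk S x0 k w"
  by (auto simp: walk_def)

lemma walk_remove:
  assumes w: "walk S x0 (Suc t) w" and k: "k < Suc t" and lp: "w (Suc k) = w k"
  shows "\<exists>w'. walk S x0 t w' \<and> w' t = w (Suc t)"
proof -
  define w' where "w' j = (if j \<le> k then w j else w (Suc j))" for j
  have "walk S x0 t w'"
    unfolding walk_def
  proof (intro conjI allI impI)
    show "w' 0 = x0" using w by (simp add: w'_def walk_def)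
    fix j assume j: "j < t"
    consider "Suc j \<le> k" | "j = k" | "k < j" by linarith
    then show "w' (Suc j) \<in> S (w' j)"
    proof cases
      case 1 then show ?thesis using w j by (auto simp: w'_def walk_def)
    next
      case 2 then show ?thesis using w j lp by (auto simp: w'_def walk_def)
    next
      case 3 then show ?thesis using w j by (auto simp: w'_def walk_def)
    qed
  qed
  moreover have "w' t = w (Suc t)"
  proof (cases "t \<le> k")
    case True then have "k = t" using k by simp
    then show ?thesis using lp by (simp add: w'_def)
  qed (simp add: w'_def)
  ultimately show ?thesis by blast
qed

lemma walk_dup:
  assumes w: "walk S x0 t w" and k: "k < t" and lp: "w (Suc k) = w k"
  shows "\<exists>w'. walk S x0 (Suc t) w' \<and> w' (Suc t) = w t"
proof -
  define w' where "w' j = (if j \<le> k then w j else w (j - 1))" for j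
  have "walk S x0 (Suc t) w'"
    unfolding walk_def
  proof (intro conjI allI impI)
    show "w' 0 = x0" using w by (simp add: w'_def walk_def)
    fix j assume j: "j < Suc t"
    consider "Suc j \<le> k" | "j = k" | "k < j" by linarith
    then show "w' (Suc j) \<in> S (w' j)"
    proof cases
      case 1 then show ?thesis using w j k by (auto simp: w'_def walk_def)
    next
      case 2 then show ?thesis using w j k lp by (auto simp: w'_def walk_def)
    next
      case 3
      then have j1: "Suc (j - 1) = j" "j - 1 < t" using j by auto
      have "w (Suc (j - 1)) \<in> S (w (j - 1))" using w j1(2) by (auto simp: walk_def)
      then have "w j \<in> S (w (j - 1))" by (simp only: j1(1))
      then show ?thesis using 3 by (auto simp: w'_def)
    qed
  qed
  moreover have "w' (Suc t) = w t" using k by (auto simp: w'_def)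
  ultimately show ?thesis by blast
qed

context
  fixes S :: "'a \<Rightarrow> 'a set" and phi :: "'a \<Rightarrow> nat" and K :: nat and x0 :: 'a
  assumes A1: "\<And>g g'. g' \<in> S g \<Longrightarrow> g' \<noteq> g \<Longrightarrow> phi g' = Suc (phi g)"
    and A2: "\<And>g. S g \<noteq> {}"
    and A3: "\<And>g. phi g \<le> K"
begin

lemma phi_mono_step: "g' \<in> S g \<Longrightarrow> phi g \<le> phi g'"
  using A1 by (cases "g' = g") auto

lemma walk_phi_le: "walk S x0 t w \<Longrightarrow> k \<le> t \<Longrightarrow> phi x0 \<le> phi (w k) \<and> phi (w k) \<le> phi x0 + k"
proof (induction k)
  case 0 then show ?case by (simp add: walk_def)
next
  case (Suc k)
  then have st: "w (Suc k) \<in> S (w k)" by (auto simp: walk_def)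
  have "phi (w (Suc k)) \<le> Suc (phi (w k))" using A1[OF st] by (cases "w (Suc k) = w k") auto
  then show ?case using Suc phi_mono_step[OF st] by auto
qed

lemma walk_phi_eq: "walk S x0 t w \<Longrightarrow> \<forall>j<t. w (Suc j) \<noteq> w j \<Longrightarrow> k \<le> t \<Longrightarrow> phi (w k) = phi x0 + k"
proof (induction k)
  case 0 then show ?case by (simp add: walk_def)
next
  case (Suc k)
  then have st: "w (Suc k) \<in> S (w k)" by (auto simp: walk_def)
  then show ?case using Suc A1[OF st] by auto
qed

lemma loopless:
  "walk S x0 t w \<Longrightarrow> \<exists>t' w'. walk S x0 t' w' \<and> w' t' = w t \<and> (\<forall>j<t'. w' (Suc j) \<noteq> w' j)"
proof (induction t arbitrary: w)
  case 0 then show ?case by blast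
next
  case (Suc t)
  show ?case
  proof (cases "\<exists>k<Suc t. w (Suc k) = w k")
    case True
    then obtain k where "k < Suc t" "w (Suc k) = w k" by blast
    from walk_remove[OF Suc.prems this] obtain w' where "walk S x0 t w'" "w' t = w (Suc t)" by blast
    then show ?thesis using Suc.IH[of w'] by auto
  next
  case False then show ?thesis using Suc.prems by blast
  qed
qed

definition VV where "VV = (\<Union>t. ASi S t {x0})"

lemma VV_walk: "g \<in> VV \<longleftrightarrow> (\<exists>t w. walk S x0 t w \<and> w t = g)"
  by (auto simp: VV_def ASi_walk)

definition DD where "DD = Max (phi ` VV) - phi x0"

lemma x0_VV: "x0 \<in> VV" unfolding VV_walk by (rule exI[of _ 0], auto simp: walk_def)

lemma fin_phi: "finite (phi ` VV)"
  by (rule finite_subset[of _ "{..K}"]) (use A3 in auto)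

lemma VV_bounds: "g \<in> VV \<Longrightarrow> phi x0 \<le> phi g \<and> phi g \<le> phi x0 + DD"
proof -
  assume g: "g \<in> VV"
  then obtain t w where w: "walk S x0 t w" "w t = g" by (auto simp: VV_walk)
  have "phi x0 \<le> phi g" using walk_phi_le[OF w(1) order_refl] w(2) by simp
  moreover have "phi g \<le> Max (phi ` VV)" using fin_phi g by auto
  ultimately show ?thesis by (simp add: DD_def)
qed

lemma top_exists: "\<exists>w. walk S x0 DD w \<and> (\<forall>j<DD. w (Suc j) \<noteq> w j)"
proof -
  have "Max (phi ` VV) \<in> phi ` VV" using fin_phi x0_VV by (intro Max_in) auto
  then obtain g where g: "g \<in> VV" "phi g = Max (phi ` VV)" by auto
  then obtain t w where "walk S x0 t w" "w t = g" by (auto simp: VV_walk)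
  from loopless[OF this(1)] this(2) obtain t' w' where w': "walk S x0 t' w'" "w' t' = g" "\<forall>j<t'. w' (Suc j) \<noteq> w' j"
    by auto
  have "phi g = phi x0 + t'" using walk_phi_eq[OF w'(1) w'(3) order_refl] w'(2) by simp
  then have "t' = DD" using g VV_bounds[OF x0_VV] by (simp add: DD_def)
  then show ?thesis using w' by blast
qed

lemma W_stable: "ASi S (Suc DD) {x0} = ASi S DD {x0}"
proof
  show "ASi S (Suc DD) {x0} \<subseteq> ASi S DD {x0}"
  proof
    fix g assume "g \<in> ASi S (Suc DD) {x0}"
    then obtain w where w: "walk S x0 (Suc DD) w" "w (Suc DD) = g" by (auto simp: ASi_walk)
    have gV: "g \<in> VV" using w by (auto simp: VV_walk)
    have "\<exists>k<Suc DD. w (Suc k) = w k"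
    proof (rule ccontr)
      assume "\<not> ?thesis"
      then have "phi g = phi x0 + Suc DD" using walk_phi_eq[OF w(1) _ order_refl] w(2) by auto
      then show False using VV_bounds[OF gV] by simp
    qed
    then obtain k where "k < Suc DD" "w (Suc k) = w k" by blast
    from walk_remove[OF w(1) this] obtain w' where "walk S x0 DD w'" "w' DD = w (Suc DD)" by blast
    then show "g \<in> ASi S DD {x0}" unfolding ASi_walk using w(2) by (metis (mono_tags, lifting) mem_Collect_eq)
  qed
next
  show "ASi S DD {x0} \<subseteq> ASi S (Suc DD) {x0}"
  proof
    fix g assume "g \<in> ASi S DD {x0}"
    then obtain w where w: "walk S x0 DD w" "w DD = g" by (auto simp: ASi_walk)
    show "g \<in> ASi S (Suc DD) {x0}"
    proof (cases "\<exists>k<DD. w (Suc k) = w k")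
      case True
      then obtain k where "k < DD" "w (Suc k) = w k" by blast
      from walk_dup[OF w(1) this] obtain w' where "walk S x0 (Suc DD) w'" "w' (Suc DD) = w DD" by blast
      then show ?thesis unfolding ASi_walk using w(2) by (metis (mono_tags, lifting) mem_Collect_eq)
    next
      case False
      then have pg: "phi g = phi x0 + DD" using walk_phi_eq[OF w(1) _ order_refl] w(2) by auto
      obtain g' where g': "g' \<in> S g" using A2 by blast
      define w' where "w' = w(Suc DD := g')"
      have w': "walk S x0 (Suc DD) w'" using w g' by (auto simp: walk_def w'_def less_Suc_eq)
      moreover have "w' (Suc DD) = g'" by (simp add: w'_def)
      ultimately have "g' \<in> VV" unfolding VV_walk by blast
      then have "g' = g" using VV_bounds[of g'] A1[OF g'] pg by fastforce
      then have "w' (Suc DD) = g" by (simp add: w'_def)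
      then show ?thesis unfolding ASi_walk using w' by (metis (mono_tags, lifting) mem_Collect_eq)
    qed
  qed
qed

lemma W_shift: "ASi S (Suc t) {x0} = ASi S t {x0} \<Longrightarrow> ASi S (t + k) {x0} = ASi S t {x0}"
proof (induction k)
  case 0 then show ?case by simp
next
  case (Suc k)
  have "ASi S (t + Suc k) {x0} = AS S (ASi S (t + k) {x0})" by (simp only: add_Suc_right ASi_Suc)
  also have "\<dots> = AS S (ASi S t {x0})" using Suc.IH Suc.prems by (simp only:)
  also have "\<dots> = ASi S (Suc t) {x0}" by (simp only: ASi_Suc)
  finally show ?case using Suc.prems by (rule trans)
qed

lemma Least_DD: "(LEAST t. ASi S (Suc t) {x0} = ASi S t {x0}) = DD"
proof (rule Least_equality)
  show "ASi S (Suc DD) {x0} = ASi S DD {x0}" by (rule W_stable)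
  fix t assume eq: "ASi S (Suc t) {x0} = ASi S t {x0}"
  show "DD \<le> t"
  proof (rule ccontr)
    assume "\<not> DD \<le> t"
    then have lt: "t < DD" by simp
    obtain w where w: "walk S x0 DD w" "\<forall>j<DD. w (Suc j) \<noteq> w j" using top_exists by blast
    have "w DD \<in> ASi S DD {x0}" using w by (auto simp: ASi_walk)
    also have "ASi S DD {x0} = ASi S t {x0}" using W_shift[OF eq, of "DD - t"] lt by simp
    finally obtain w' where "walk S x0 t w'" "w' t = w DD" by (auto simp: ASi_walk)
    then have "phi (w DD) \<le> phi x0 + t" using walk_phi_le[of t w' t] by auto
    moreover have "phi (w DD) = phi x0 + DD" using walk_phi_eq[OF w(1) w(2) order_refl] .
    ultimately show False using lt by simp
  qed
qed

definition gpath where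
  "gpath p \<longleftrightarrow> p \<noteq> [] \<and> distinct p \<and> set p \<subseteq> VV \<and>
     (\<forall>k. Suc k < length p \<longrightarrow> p ! Suc k \<in> S (p ! k) \<and> p ! Suc k \<noteq> p ! k)"

lemma gpath_bound: "gpath p \<Longrightarrow> length p - 1 \<le> DD"
proof -
  assume gp: "gpath p"
  have ph: "k < length p \<Longrightarrow> phi (p ! k) = phi (p ! 0) + k" for k
  proof (induction k)
    case 0 then show ?case by simp
  next
    case (Suc k)
    then have "p ! Suc k \<in> S (p ! k)" "p ! Suc k \<noteq> p ! k" using gp by (auto simp: gpath_def)
    then show ?case using A1 Suc by auto
  qed
  have ne: "p \<noteq> []" and sub: "set p \<subseteq> VV" using gp by (auto simp: gpath_def)
  have l: "length p - 1 < length p" using ne by simp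
  have "p ! 0 \<in> VV" "p ! (length p - 1) \<in> VV" using sub ne l by (auto simp: nth_mem subsetD)
  then have "phi x0 \<le> phi (p ! 0)" "phi (p ! (length p - 1)) \<le> phi x0 + DD"
    using VV_bounds by blast+
  then show ?thesis using ph[OF l] by linarith
qed

lemma gpath_exists: "\<exists>p. gpath p \<and> length p - 1 = DD"
proof -
  obtain w where w: "walk S x0 DD w" "\<forall>j<DD. w (Suc j) \<noteq> w j" using top_exists by blast
  define p where "p = map w [0..<Suc DD]"
  have lp: "length p = Suc DD" by (simp add: p_def)
  have pk: "p ! k = w k" if "k < Suc DD" for k
    using that unfolding p_def by (simp only: nth_map length_upt nth_upt) simp
  have ph: "k \<le> DD \<Longrightarrow> phi (w k) = phi x0 + k" for k using walk_phi_eq[OF w] by blast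
  have inj: "inj_on w (set [0..<Suc DD])"
  proof (rule inj_onI)
    fix a b assume ab: "a \<in> set [0..<Suc DD]" "b \<in> set [0..<Suc DD]" and e: "w a = w b"
    have a: "a \<le> DD" and b: "b \<le> DD" using ab by (simp_all del: upt_Suc)
    have "phi x0 + a = phi (w a)" using ph[OF a] by simp
    also have "\<dots> = phi (w b)" by (simp only: e)
    also have "\<dots> = phi x0 + b" using ph[OF b] by simp
    finally show "a = b" by simp
  qed
  have d: "distinct p" unfolding p_def distinct_map using inj distinct_upt by blast
  have sv: "set p \<subseteq> VV"
  proof
    fix g assume "g \<in> set p"
    then have "g \<in> w ` {0..<Suc DD}" unfolding p_def set_map set_upt .
    then obtain k where k0: "k \<in> {0..<Suc DD}" and k2: "g = w k" by blast
    from k0 have k1: "k \<le> DD" by simp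
    note k = k1 k2
    have "walk S x0 k w" using walk_prefix[OF w(1) k(1)] .
    then show "g \<in> VV" unfolding VV_walk using k(2) by blast
  qed
  have ed: "\<forall>k. Suc k < length p \<longrightarrow> p ! Suc k \<in> S (p ! k) \<and> p ! Suc k \<noteq> p ! k"
  proof (intro allI impI)
    fix k assume "Suc k < length p"
    then have k: "k < DD" by (simp add: lp)
    have "p ! k = w k" "p ! Suc k = w (Suc k)" using k pk by auto
    then show "p ! Suc k \<in> S (p ! k) \<and> p ! Suc k \<noteq> p ! k" using w k by (auto simp: walk_def)
  qed
  have "gpath p" unfolding gpath_def using d sv ed lp by auto
  then show ?thesis using lp by auto
qed

end



definition succG :: "nat \<Rightarrow> nat \<Rightarrow> mgame \<Rightarrow> mgame set" where
  "succG n m g = {adapt n g v | \<sigma> v. \<sigma> \<in> NME n m g \<and> v \<in> chi n m \<sigma>}"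

lemma AD_AS: "AD n m M = AS (succG n m) M"
  by (auto simp: AD_def AS_def succG_def)

lemma AD_iter_ASi: "AD_iter n m t M = ASi (succG n m) t M"
  by (induction t arbitrary: M) (auto simp: AD_AS ASi.simps)

definition Agr :: "nat \<Rightarrow> nat \<Rightarrow> mgame \<Rightarrow> nat list set" where
  "Agr n m g = {v \<in> positions n m. \<forall>i<n. snd g i v = fst g v}"

lemma finite_positions: "finite (positions n m)"
proof (rule finite_subset)
  show "positions n m \<subseteq> {xs. set xs \<subseteq> {..<m} \<and> length xs = n}"
    by (auto simp: positions_def in_set_conv_nth)
  show "finite {xs. set xs \<subseteq> {..<m} \<and> length xs = n}"
    by (rule finite_lists_length_eq) simp
qed

lemma finite_Agr: "finite (Agr n m g)"
  by (rule finite_subset[OF _ finite_positions]) (auto simp: Agr_def)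

lemma Agr_adapt: "v \<in> positions n m \<Longrightarrow> Agr n m (adapt n g v) = insert v (Agr n m g)"
  by (auto simp: Agr_def adapt_def)

lemma adapt_eq: assumes "v \<in> positions n m" shows "adapt n g v = g \<longleftrightarrow> v \<in> Agr n m g"
proof
  assume "adapt n g v = g"
  then have "snd (adapt n g v) i v = snd g i v" for i by simp
  then have "snd g i v = fst g v" if i: "i < n" for i
  proof -
    have "snd (adapt n g v) i v = fst g v" using i by (simp add: adapt_def)
    then show ?thesis using \<open>snd (adapt n g v) i v = snd g i v\<close> by simp
  qed
  then show "v \<in> Agr n m g" using assms by (auto simp: Agr_def)
next
  assume a: "v \<in> Agr n m g"
  have "(\<lambda>i. if i < n then (snd g i)(v := fst g v) else snd g i) = snd g"
  proof
    fix i show "(if i < n then (snd g i)(v := fst g v) else snd g i) = snd g i"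
      using a by (auto simp: Agr_def)
  qed
  then show "adapt n g v = g" by (simp add: adapt_def)
qed

lemma chi_pos: "v \<in> chi n m \<sigma> \<Longrightarrow> v \<in> positions n m"
  by (simp add: chi_def)

lemma succG_A1:
  assumes "g' \<in> succG n m g" "g' \<noteq> g"
  shows "card (Agr n m g') = Suc (card (Agr n m g))"
proof -
  obtain \<sigma> v where v: "v \<in> chi n m \<sigma>" and g': "g' = adapt n g v"
    using assms(1) by (auto simp: succG_def)
  have vp: "v \<in> positions n m" using chi_pos[OF v] .
  have "v \<notin> Agr n m g" using adapt_eq[OF vp] assms(2) g' by blast
  then show ?thesis using Agr_adapt[OF vp] g' finite_Agr by simp
qed

lemma succG_A2:
  assumes "0 < n" "0 < m"
  shows "succG n m g \<noteq> {}"
proof -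
  define \<tau> where "\<tau> i = (SOME \<tau>. nash_eq n m (snd g i) \<tau>)" for i
  have ne: "nash_eq n m (snd g i) (\<tau> i)" for i
    unfolding \<tau>_def by (rule someI_ex[OF nash_exists[OF assms]])
  define \<sigma> where "\<sigma> i = \<tau> i i" for i
  have sN: "\<sigma> \<in> NME n m g" by (auto simp: NME_def \<sigma>_def intro: ne)
  have mx: "mixed m (\<sigma> j)" if "j < n" for j using ne[of j] that by (simp add: nash_eq_def \<sigma>_def)
  have ex: "\<exists>s. s < m \<and> 0 < \<sigma> j s" if "j < n" for j
  proof (rule ccontr)
    assume "\<not> ?thesis"
    then have "\<forall>s<m. \<sigma> j s = 0" using mx[OF that] by (force simp: mixed_def)
    then have "(\<Sum>s<m. \<sigma> j s) = 0" by simp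
    then show False using mx[OF that] by (simp add: mixed_def)
  qed
  define v where "v = map (\<lambda>j. SOME s. s < m \<and> 0 < \<sigma> j s) [0..<n]"
  have vj: "v ! j < m \<and> 0 < \<sigma> j (v ! j)" if "j < n" for j
    using someI_ex[OF ex[OF that]] that by (simp add: v_def)
  have "v \<in> chi n m \<sigma>"
    using vj by (auto simp: chi_def positions_def support_def v_def)
  then have "adapt n g v \<in> succG n m g" using sN by (auto simp: succG_def)
  then show ?thesis by blast
qed

lemma succG_A3: "card (Agr n m g) \<le> card (positions n m)"
  by (rule card_mono[OF finite_positions]) (auto simp: Agr_def)



theorem proposition20:
  fixes n m :: nat and mG :: mgame
  assumes "0 < n" and "0 < m"
  shows "(\<exists>p. is_path' n m mG p \<and> length p - 1 = AD_length n m mG) \<and>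
         (\<forall>p. is_path' n m mG p \<longrightarrow> length p - 1 \<le> AD_length n m mG)"
proof -
  define S where "S = succG n m"
  define phi where "phi = (\<lambda>g. card (Agr n m g))"
  define K where "K = card (positions n m)"
  have A1: "\<And>g g'. g' \<in> S g \<Longrightarrow> g' \<noteq> g \<Longrightarrow> phi g' = Suc (phi g)"
    unfolding S_def phi_def by (rule succG_A1)
  have A2: "\<And>g. S g \<noteq> {}" unfolding S_def by (rule succG_A2[OF assms])
  have A3: "\<And>g. phi g \<le> K" unfolding phi_def K_def by (rule succG_A3)
  have "AD_star n m {mG} = (\<Union>t. ASi S t {mG})"
    by (simp add: AD_star_def AD_iter_ASi S_def)
  also have "\<dots> = VV S mG" by (rule VV_def[OF A1 A2 A3, symmetric])
  finally have star: "AD_star n m {mG} = VV S mG" .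
  have len: "AD_length n m mG = DD S phi mG"
  proof -
    have "(LEAST t. ASi S (Suc t) {mG} = ASi S t {mG}) = DD S phi mG" by (rule Least_DD[OF A1 A2 A3])
    then show ?thesis by (simp add: AD_length_def AD_iter_ASi S_def)
  qed
  have edge: "(\<exists>\<sigma> v. \<sigma> \<in> NME n m g1 \<and> v \<in> chi n m \<sigma> \<and> g2 = adapt n g1 v) \<longleftrightarrow> g2 \<in> S g1" for g1 g2
    by (auto simp: S_def succG_def)
  have pathiff: "is_path' n m mG p \<longleftrightarrow> gpath S mG p" for p
  proof -
  have gd: "gpath S mG p \<longleftrightarrow> p \<noteq> [] \<and> distinct p \<and> set p \<subseteq> VV S mG \<and>
     (\<forall>k. Suc k < length p \<longrightarrow> p ! Suc k \<in> S (p ! k) \<and> p ! Suc k \<noteq> p ! k)"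
    by (rule gpath_def[OF A1 A2 A3])
  show ?thesis
  proof
    assume h: "is_path' n m mG p"
    then show "gpath S mG p"
      unfolding gd is_path'_def adapt_edge'_def adapt_edge_def edge star
      by auto
  next
    assume h: "gpath S mG p"
    then have ne: "p \<noteq> []" and d: "distinct p" and sv: "set p \<subseteq> VV S mG"
      and ed: "\<forall>k. Suc k < length p \<longrightarrow> p ! Suc k \<in> S (p ! k) \<and> p ! Suc k \<noteq> p ! k"
      unfolding gd by auto
    have "\<forall>k. Suc k < length p \<longrightarrow> p ! k \<in> VV S mG \<and> p ! Suc k \<in> VV S mG"
      using sv by (auto intro: nth_mem[THEN subsetD[OF sv]])
    then show "is_path' n m mG p"
      unfolding is_path'_def adapt_edge'_def adapt_edge_def edge star
      using ne d sv ed by auto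
  qed
  qed
  have ex: "\<exists>p. gpath S mG p \<and> length p - 1 = DD S phi mG" by (rule gpath_exists[OF A1 A2 A3])
  have bd: "gpath S mG p \<Longrightarrow> length p - 1 \<le> DD S phi mG" for p by (rule gpath_bound[OF A1 A2 A3])
  show ?thesis using ex bd len pathiff by auto
qed

end
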